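(* Let $k,\ell$ be integers with $1\leq k\leq \ell$, let $L$ be a (right) Leibniz algebra and let $B$ be an ideal of $L$ which is $\mathrm{Es}_k$-right nil. Let $P=a_ma_{m-1}\cdots a_2a_1$ be a right product of elements $a_1,\dots,a_m\in L$ of which at least $2\ell$ belong to $B$. Then $P\in (B^{\ell})_{(L,k)}$.
   Context: A (right) Leibniz algebra is a vector space $L$ over a field $F$ (characteristic $\neq 2$, finite-dimensional) with a bilinear product $(x,y)\mapsto xy$ satisfying $x(yz)=(xy)z-(xz)y$. For subspaces $U,V$, $UV$ is the span of all $uv$; right powers $B^1=B$, $B^{j+1}=B^jB$. An ideal is a subspace $B$ with $LB\subseteq B$, $BL\subseteq B$. Right product: $a_m\cdots a_1:=((\cdots((a_ma_{m-1})a_{m-2})\cdots)a_2)a_1$. For a subspace $D\subseteq L$ and integer $k\geq 1$, $D_{(L,k)}$ is the subspace spanned by all right products $d\,x_k\cdots x_2x_1$ with $d\in D$, $x_1,\dots,x_k\in L$. $\mathrm{Ess}(L)$ is the ideal generated by all squares $xx$, and $\mathrm{Es}(B)=B\cap\mathrm{Ess}(L)$. A nonzero ideal $B$ is called $\mathrm{Es}_k$-right nil if $\mathrm{Es}(B)_{(L,k)}=\{0\}$. *)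

theory Defs
  imports Complex_Main
begin

definition leibniz_algebra ::
  "('a::field \<Rightarrow> 'v::ab_group_add \<Rightarrow> 'v) \<Rightarrow> ('v \<Rightarrow> 'v \<Rightarrow> 'v) \<Rightarrow> bool" where
  "leibniz_algebra sc mul \<longleftrightarrow>
     (\<exists>Bs. finite_dimensional_vector_space sc Bs) \<and>
     (2::'a) \<noteq> 0 \<and>
     (\<forall>x y z. mul (x + y) z = mul x z + mul y z) \<and>
     (\<forall>x y z. mul x (y + z) = mul x y + mul x z) \<and>
     (\<forall>c x y. mul (sc c x) y = sc c (mul x y)) \<and>
     (\<forall>c x y. mul x (sc c y) = sc c (mul x y)) \<and>
     (\<forall>x y z. mul x (mul y z) = mul (mul x y) z - mul (mul x z) y)"

definition sprod ::
  "('a::field \<Rightarrow> 'v::ab_group_add \<Rightarrow> 'v) \<Rightarrow> ('v \<Rightarrow> 'v \<Rightarrow> 'v) \<Rightarrow> 'v set \<Rightarrow> 'v set \<Rightarrow> 'v set" where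
  "sprod sc mul U V = module.span sc {mul u v | u v. u \<in> U \<and> v \<in> V}"

text \<open>Right powers: rpow B 1 = B, rpow B (j+1) = (rpow B j) B.
  (The value at 0 is an irrelevant convention.)\<close>
fun rpow ::
  "('a::field \<Rightarrow> 'v::ab_group_add \<Rightarrow> 'v) \<Rightarrow> ('v \<Rightarrow> 'v \<Rightarrow> 'v) \<Rightarrow> 'v set \<Rightarrow> nat \<Rightarrow> 'v set" where
  "rpow sc mul B 0 = B"
| "rpow sc mul B (Suc 0) = B"
| "rpow sc mul B (Suc (Suc j)) = sprod sc mul (rpow sc mul B (Suc j)) B"

definition lideal ::
  "('a::field \<Rightarrow> 'v::ab_group_add \<Rightarrow> 'v) \<Rightarrow> ('v \<Rightarrow> 'v \<Rightarrow> 'v) \<Rightarrow> 'v set \<Rightarrow> bool" where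
  "lideal sc mul B \<longleftrightarrow> module.subspace sc B \<and>
     (\<forall>x b. b \<in> B \<longrightarrow> mul x b \<in> B \<and> mul b x \<in> B)"

text \<open>Right product: rprod [a_m, a_(m-1), ..., a_1] = ((...(a_m a_(m-1))...)a_2)a_1.\<close>
fun rprod :: "('v \<Rightarrow> 'v \<Rightarrow> 'v) \<Rightarrow> 'v list \<Rightarrow> 'v" where
  "rprod mul [] = undefined"
| "rprod mul (x # xs) = foldl mul x xs"

definition DLk ::
  "('a::field \<Rightarrow> 'v::ab_group_add \<Rightarrow> 'v) \<Rightarrow> ('v \<Rightarrow> 'v \<Rightarrow> 'v) \<Rightarrow> 'v set \<Rightarrow> nat \<Rightarrow> 'v set" where
  "DLk sc mul D k = module.span sc {rprod mul (d # xs) | d xs. d \<in> D \<and> length xs = k}"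

definition Ess ::
  "('a::field \<Rightarrow> 'v::ab_group_add \<Rightarrow> 'v) \<Rightarrow> ('v \<Rightarrow> 'v \<Rightarrow> 'v) \<Rightarrow> 'v set" where
  "Ess sc mul = \<Inter>{I. lideal sc mul I \<and> {mul x x | x. True} \<subseteq> I}"

definition Es ::
  "('a::field \<Rightarrow> 'v::ab_group_add \<Rightarrow> 'v) \<Rightarrow> ('v \<Rightarrow> 'v \<Rightarrow> 'v) \<Rightarrow> 'v set \<Rightarrow> 'v set" where
  "Es sc mul B = B \<inter> Ess sc mul"

definition Es_right_nil ::
  "('a::field \<Rightarrow> 'v::ab_group_add \<Rightarrow> 'v) \<Rightarrow> ('v \<Rightarrow> 'v \<Rightarrow> 'v) \<Rightarrow> nat \<Rightarrow> 'v set \<Rightarrow> bool" where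
  "Es_right_nil sc mul k B \<longleftrightarrow> lideal sc mul B \<and> B \<noteq> {0} \<and> DLk sc mul (Es sc mul B) k = {0}"

end

theory Submission
  imports Defs
begin

lemma foldl_add:
  assumes "\<forall>x y z. mul (x + y) z = mul x z + mul y z"
  shows "foldl mul (x + y) Y = foldl mul x Y + foldl mul y (Y::'v::ab_group_add list)"
  using assms by (induction Y arbitrary: x y) auto

lemma mul_zero_left:
  fixes mul :: "'v::ab_group_add \<Rightarrow> 'v \<Rightarrow> 'v"
  assumes "\<forall>x y z. mul (x + y) z = mul x z + mul y z"
  shows "mul 0 z = 0"
proof -
  have h: "mul (0+0) z = mul 0 z + mul 0 z" by (rule assms[rule_format])
  then show ?thesis by simp
qed

lemma rpow_closed:
  assumes LA: "leibniz_algebra sc mul" and I: "lideal sc mul B"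
  shows "u \<in> rpow sc mul B (Suc j) \<Longrightarrow> mul u x \<in> rpow sc mul B (Suc j)"
proof (induction j arbitrary: u x)
  case 0
  then show ?case using I by (simp add: lideal_def)
next
  case (Suc j)
  from LA obtain Bs where fd: "finite_dimensional_vector_space sc Bs" by (auto simp: leibniz_algebra_def)
  then have M: "module sc"
    by (simp add: finite_dimensional_vector_space_def module_iff_vector_space)
  have addl: "\<forall>x y z. mul (x + y) z = mul x z + mul y z"
    and scl: "\<forall>c x y. mul (sc c x) y = sc c (mul x y)"
    and lb: "\<forall>x y z. mul x (mul y z) = mul (mul x y) z - mul (mul x z) y"
    using LA by (auto simp: leibniz_algebra_def)
  let ?S = "{mul u b | u b. u \<in> rpow sc mul B (Suc j) \<and> b \<in> B}"
  have uS: "u \<in> module.span sc ?S" using Suc.prems by (simp add: sprod_def)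
  have "mul u x \<in> module.span sc ?S"
  proof (rule module.span_induct_alt[OF M uS])
    show "mul 0 x \<in> module.span sc ?S" using mul_zero_left[OF addl] module.span_zero[OF M]
      by (simp add: sprod_def)
  next
    fix c s y assume 2: "s \<in> ?S" "mul y x \<in> module.span sc ?S"
    then obtain u b where ub: "s = mul u b" "u \<in> rpow sc mul B (Suc j)" "b \<in> B" by blast
    have der: "mul (mul u b) x = mul (mul u x) b + mul u (mul b x)"
      using lb[rule_format, of u b x] by (simp add: algebra_simps)
    have "mul (mul u x) b \<in> module.span sc ?S"
      using Suc.IH[OF ub(2)] ub(3) by (auto intro!: module.span_base[OF M])
    moreover have "mul u (mul b x) \<in> module.span sc ?S"
      using ub I by (auto simp: lideal_def intro!: module.span_base[OF M])
    ultimately have "mul (mul u x) b + mul u (mul b x) \<in> module.span sc ?S"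
      by (rule module.span_add[OF M])
    then have sx: "mul s x \<in> module.span sc ?S" using der ub(1) by simp
    have eq: "mul (sc c s + y) x = sc c (mul s x) + mul y x"
      using addl scl by simp
    have "sc c (mul s x) + mul y x \<in> module.span sc ?S"
      by (rule module.span_add[OF M module.span_scale[OF M sx] 2(2)])
    then show "mul (sc c s + y) x \<in> module.span sc ?S" using eq by simp
  qed
  then show ?case by (simp add: sprod_def)
qed

lemma rpow_foldl:
  assumes LA: "leibniz_algebra sc mul" and I: "lideal sc mul B"
  shows "u \<in> rpow sc mul B (Suc j) \<Longrightarrow> foldl mul u xs \<in> rpow sc mul B (Suc j)"
  by (induction xs arbitrary: u) (auto intro: rpow_closed[OF LA I])

lemma swap_step:
  assumes LA: "leibniz_algebra sc mul"
  shows "foldl mul d (ws0 @ w # b # rest) =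
         foldl mul d (ws0 @ b # w # rest) + foldl mul d (ws0 @ mul w b # rest)"
proof -
  have addl: "\<forall>x y z. mul (x + y) z = mul x z + mul y z"
    and lb: "\<forall>x y z. mul x (mul y z) = mul (mul x y) z - mul (mul x z) y"
    using LA by (auto simp: leibniz_algebra_def)
  define u where "u = foldl mul d ws0"
  have der: "mul (mul u w) b = mul (mul u b) w + mul u (mul w b)"
    using lb[rule_format, of u w b] by (simp add: algebra_simps)
  show ?thesis unfolding foldl_append
    by (simp add: u_def[symmetric] der foldl_add[OF addl])
qed

lemma mainG:
  assumes LA: "leibniz_algebra sc mul" and I: "lideal sc mul B"
    and l1: "1 \<le> l" and kz: "length zs \<ge> k"
  shows "i \<le> l \<Longrightarrow> (i = 0 \<or> d \<in> rpow sc mul B i) \<Longrightarrow>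
         length (filter (\<lambda>a. a \<in> B) xs) + i \<ge> l \<Longrightarrow>
         foldl mul d (xs @ zs) \<in> DLk sc mul (rpow sc mul B l) k"
proof (induction "length xs" arbitrary: xs d i rule: less_induct)
  case less
  from LA obtain Bs where fd: "finite_dimensional_vector_space sc Bs" by (auto simp: leibniz_algebra_def)
  then have M: "module sc"
    by (simp add: finite_dimensional_vector_space_def module_iff_vector_space)
  show ?case
  proof (cases "i = l")
    case True
    then have dB: "d \<in> rpow sc mul B l" using less.prems l1 by auto
    obtain zs1 zs2 where zs: "zs = zs1 @ zs2" "length zs2 = k"
      using kz by (metis append_take_drop_id diff_diff_cancel length_drop)
    obtain j where j: "l = Suc j" using l1 by (cases l) auto
    have "foldl mul d (xs @ zs1) \<in> rpow sc mul B l"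
      using rpow_foldl[OF LA I, of d j "xs @ zs1"] dB j by simp
    then have "foldl mul d (xs @ zs) \<in> {rprod mul (d # xs) | d xs. d \<in> rpow sc mul B l \<and> length xs = k}"
      using zs by auto
    then show ?thesis unfolding DLk_def by (rule module.span_base[OF M])
  next
    case False
    then have "length (filter (\<lambda>a. a \<in> B) xs) \<ge> 1" using less.prems by auto
    then have "\<exists>x\<in>set xs. x \<in> B" by (metis filter_False le_zero_eq length_0_conv not_one_le_zero)
    then obtain ws b xs' where sp: "xs = ws @ b # xs'" "b \<in> B" "\<forall>x\<in>set ws. x \<notin> B"
      using split_list_first_prop[of xs "\<lambda>x. x \<in> B"] by blast
    have cnt: "length (filter (\<lambda>a. a \<in> B) xs') + 1 + i \<ge> l"
      using less.prems(3) sp by simp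
    have "\<forall>xs''. length (ws @ b # xs'') = length xs \<longrightarrow>
          length (filter (\<lambda>a. a \<in> B) xs'') + 1 + i \<ge> l \<longrightarrow>
          foldl mul d (ws @ b # xs'' @ zs) \<in> DLk sc mul (rpow sc mul B l) k"
      using sp(3)
    proof (induction ws rule: rev_induct)
      case Nil
      show ?case
      proof (intro allI impI)
        fix xs'' assume len: "length ([] @ b # xs'') = length xs"
          and c: "length (filter (\<lambda>a. a \<in> B) xs'') + 1 + i \<ge> l"
        have dbB: "mul d b \<in> rpow sc mul B (Suc i)"
        proof (cases i)
          case 0 then show ?thesis using I sp(2) by (simp add: lideal_def)
        next
          case (Suc j)
          then have "d \<in> rpow sc mul B (Suc j)" using less.prems(2) by simp
          then show ?thesis using Suc sp(2)
            by (auto simp: sprod_def intro!: module.span_base[OF M])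
        qed
        have l1': "length xs'' < length xs" using len by simp
        have l2': "Suc i \<le> l" using False less.prems(1) by simp
        have l3': "l \<le> length (filter (\<lambda>a. a \<in> B) xs'') + Suc i" using c by simp
        have "foldl mul (mul d b) (xs'' @ zs) \<in> DLk sc mul (rpow sc mul B l) k"
          using less.hyps[of xs'' "Suc i" "mul d b", OF l1' l2' _ l3'] dbB by blast
        then show "foldl mul d ([] @ b # xs'' @ zs) \<in> DLk sc mul (rpow sc mul B l) k"
          by simp
      qed
    next
      case (snoc w ws0)
      show ?case
      proof (intro allI impI)
        fix xs'' assume len: "length ((ws0 @ [w]) @ b # xs'') = length xs"
          and c: "length (filter (\<lambda>a. a \<in> B) xs'') + 1 + i \<ge> l"
        have wB: "w \<notin> B" using snoc.prems by simp
        have ws0B: "\<forall>x\<in>set ws0. x \<notin> B" using snoc.prems by simp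
        have IH': "\<forall>xs''. length (ws0 @ b # xs'') = length xs \<longrightarrow>
          length (filter (\<lambda>a. a \<in> B) xs'') + 1 + i \<ge> l \<longrightarrow>
          foldl mul d (ws0 @ b # xs'' @ zs) \<in> DLk sc mul (rpow sc mul B l) k"
          by (rule snoc.IH[OF ws0B])
        have e1: "length (ws0 @ b # w # xs'') = length xs" using len by simp
        have e2: "length (filter (\<lambda>a. a \<in> B) (w # xs'')) + 1 + i \<ge> l" using c by simp
        have t1: "foldl mul d (ws0 @ b # (w # xs'') @ zs) \<in> DLk sc mul (rpow sc mul B l) k"
          using IH'[rule_format, OF e1 e2] .
        have wb: "mul w b \<in> B" using I sp(2) by (simp add: lideal_def)
        have t2: "foldl mul d ((ws0 @ mul w b # xs'') @ zs) \<in> DLk sc mul (rpow sc mul B l) k"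
        proof (rule less.hyps)
          show "length (ws0 @ mul w b # xs'') < length xs" using len by simp
          show "i \<le> l" by (rule less.prems(1))
          show "i = 0 \<or> d \<in> rpow sc mul B i" by (rule less.prems(2))
          show "l \<le> length (filter (\<lambda>a. a \<in> B) (ws0 @ mul w b # xs'')) + i"
            using c wb by simp
        qed
        have "foldl mul d (((ws0 @ [w]) @ b # xs'') @ zs) =
              foldl mul d (ws0 @ b # (w # xs'') @ zs) + foldl mul d ((ws0 @ mul w b # xs'') @ zs)"
          using swap_step[OF LA, of d ws0 w b "xs'' @ zs"] by simp
        then show "foldl mul d ((ws0 @ [w]) @ b # xs'' @ zs) \<in> DLk sc mul (rpow sc mul B l) k"
          using t1 t2 module.span_add[OF M] unfolding DLk_def by simp
      qed
    qed
    then show ?thesis using sp cnt by simp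
  qed
qed

theorem lemma4p3:
  fixes sc :: "'a::field \<Rightarrow> 'v::ab_group_add \<Rightarrow> 'v"
    and mul :: "'v \<Rightarrow> 'v \<Rightarrow> 'v"
    and B :: "'v set" and k l :: nat and as :: "'v list"
  assumes "leibniz_algebra sc mul"
    and "1 \<le> k" and "k \<le> l"
    and "lideal sc mul B"
    and "Es_right_nil sc mul k B"
    and "length (filter (\<lambda>a. a \<in> B) as) \<ge> 2 * l"
  shows "rprod mul as \<in> DLk sc mul (rpow sc mul B l) k"
proof -
  obtain a rest where ar: "as = a # rest" using assms(2,3,6) by (cases as) auto
  define xs where "xs = take (length rest - k) rest"
  define zs where "zs = drop (length rest - k) rest"
  have rz: "rest = xs @ zs" by (simp add: xs_def zs_def)
  have cr: "length (filter (\<lambda>a. a \<in> B) rest) + 1 \<ge> 2 * l" using assms(6) ar by (auto split: if_splits)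
  have lr: "length rest \<ge> length (filter (\<lambda>a. a \<in> B) rest)" by simp
  have "length rest \<ge> k" using cr lr assms(2,3) by linarith
  then have kz: "length zs \<ge> k" by (simp add: zs_def)
  have zk: "length zs = k" using \<open>length rest \<ge> k\<close> by (simp add: zs_def)
  have fz: "length (filter (\<lambda>a. a \<in> B) zs) \<le> k"
    using length_filter_le[of _ zs] zk by simp
  have fsplit: "length (filter (\<lambda>a. a \<in> B) rest) = length (filter (\<lambda>a. a \<in> B) xs) + length (filter (\<lambda>a. a \<in> B) zs)"
    using rz by simp
  show ?thesis
  proof (cases "a \<in> B")
    case True
    have "foldl mul a (xs @ zs) \<in> DLk sc mul (rpow sc mul B l) k"
      apply (rule mainG[OF assms(1) assms(4) _ kz, of l 1])
      using True assms(2,3) cr fz fsplit by auto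
    then show ?thesis using ar rz by simp
  next
    case False
    have cr2: "length (filter (\<lambda>a. a \<in> B) rest) \<ge> 2 * l" using assms(6) ar False by simp
    have "foldl mul a (xs @ zs) \<in> DLk sc mul (rpow sc mul B l) k"
      apply (rule mainG[OF assms(1) assms(4) _ kz, of l 0])
      using assms(2,3) cr2 fz fsplit by auto
    then show ?thesis using ar rz by simp
  qed
qed

end
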